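(* For integers $n\geq 1$ and $m\geq 1$, the total resonance graph $R_t(C(2m-1,2n+1))$ is connected.
   Context: $C(k,n)$ denotes the graph consisting of $k+1$ cycles of length $n$, say with vertices $(a,b)$, $a\in\mathbb{Z}_n$, $0\le b\le k$, and edges $(a,b)(a+1,b)$ and $(a,b)(a,b+1)$; it is the grid graph of a quadriculated cylinder with $k$ rows of $n$ squares, embedded in the sphere (capping both ends), so its faces are the $kn$ unit squares and two faces bounded by the cycles $b=0$ and $b=k$. The total resonance graph $R_t(G)$ has the perfect matchings of $G$ as vertices, two perfect matchings $M_1,M_2$ being adjacent iff their symmetric difference $M_1\oplus M_2$ is exactly the boundary cycle of one face of the embedding. *)

theory Defs
  imports Main
begin

type_synonym vtx = "nat \<times> nat"
type_synonym edge = "vtx set"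

text \<open>C(k,n): vertices (a,b), a in Z_n (represented by 0..n-1), 0 <= b <= k.\<close>
definition cyl_verts :: "nat \<Rightarrow> nat \<Rightarrow> vtx set" where
  "cyl_verts k n = {(a, b). a < n \<and> b \<le> k}"

definition hedge :: "nat \<Rightarrow> nat \<Rightarrow> nat \<Rightarrow> edge" where
  "hedge n a b = {(a, b), ((a + 1) mod n, b)}"

definition vedge :: "nat \<Rightarrow> nat \<Rightarrow> edge" where
  "vedge a b = {(a, b), (a, b + 1)}"

definition cyl_edges :: "nat \<Rightarrow> nat \<Rightarrow> edge set" where
  "cyl_edges k n =
     {hedge n a b | a b. a < n \<and> b \<le> k} \<union> {vedge a b | a b. a < n \<and> b < k}"

text \<open>Faces of the spherical embedding, given by their boundary edge sets:
  the k*n unit squares and the two capping faces bounded by the cycles b = 0 and b = k.\<close>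
definition square_face :: "nat \<Rightarrow> nat \<Rightarrow> nat \<Rightarrow> edge set" where
  "square_face n a b = {hedge n a b, hedge n a (b + 1), vedge a b, vedge ((a + 1) mod n) b}"

definition cycle_face :: "nat \<Rightarrow> nat \<Rightarrow> edge set" where
  "cycle_face n b = {hedge n a b | a. a < n}"

definition cyl_faces :: "nat \<Rightarrow> nat \<Rightarrow> edge set set" where
  "cyl_faces k n =
     {square_face n a b | a b. a < n \<and> b < k} \<union> {cycle_face n 0, cycle_face n k}"

definition perfect_matching :: "'v set \<Rightarrow> 'v set set \<Rightarrow> 'v set set \<Rightarrow> bool" where
  "perfect_matching V E M \<longleftrightarrow> M \<subseteq> E \<and> (\<forall>v\<in>V. \<exists>!e. e \<in> M \<and> v \<in> e)"

definition pms :: "nat \<Rightarrow> nat \<Rightarrow> edge set set" where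
  "pms k n = {M. perfect_matching (cyl_verts k n) (cyl_edges k n) M}"

definition total_resonance :: "nat \<Rightarrow> nat \<Rightarrow> (edge set \<times> edge set) set" where
  "total_resonance k n =
     {(M1, M2). M1 \<in> pms k n \<and> M2 \<in> pms k n \<and> (M1 - M2) \<union> (M2 - M1) \<in> cyl_faces k n}"

definition graph_connected :: "'a set \<Rightarrow> ('a \<times> 'a) set \<Rightarrow> bool" where
  "graph_connected V R \<longleftrightarrow> V \<noteq> {} \<and> (\<forall>x\<in>V. \<forall>y\<in>V. (x, y) \<in> (R \<inter> V \<times> V)\<^sup>*)"

end

theory Submission
  imports Defs
begin

definition sc :: "nat \<Rightarrow> nat \<Rightarrow> nat" where "sc N a = Suc a mod N"

lemma sc_lt: "0 < N \<Longrightarrow> sc N a < N" by (simp add: sc_def)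

lemma sc_if: "a < N \<Longrightarrow> sc N a = (if Suc a = N then 0 else Suc a)"
  unfolding sc_def by auto

lemma sc_neq: "2 \<le> N \<Longrightarrow> a < N \<Longrightarrow> sc N a \<noteq> a"
  using sc_if[of a N] by auto

lemma sc_sc_neq: "3 \<le> N \<Longrightarrow> a < N \<Longrightarrow> sc N (sc N a) \<noteq> a"
proof -
  assume N: "3 \<le> N" and a: "a < N"
  have "sc N (sc N a) = (a + 2) mod N" unfolding sc_def by (simp add: mod_Suc_eq)
  moreover have "(a + 2) mod N \<noteq> a"
  proof (cases "a + 2 < N")
    case True then show ?thesis by simp
  next
    case False
    then have "(a + 2) mod N = a + 2 - N" using a N
      by (simp add: le_mod_geq)
    then show ?thesis using N False by auto
  qed
  ultimately show ?thesis by simp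
qed

lemma sc_inj: "a < N \<Longrightarrow> b < N \<Longrightarrow> sc N a = sc N b \<Longrightarrow> a = b"
  using sc_if[of a N] sc_if[of b N] by (auto split: if_splits)

lemma hedge_sc: "hedge N a b = {(a,b),(sc N a, b)}" by (simp add: hedge_def sc_def)
lemma square_sc: "square_face N a b = {hedge N a b, hedge N a (Suc b), vedge a b, vedge (sc N a) b}"
  unfolding square_face_def sc_def by simp

lemma hedge_row: assumes "hedge N x y = hedge N a b" shows "y = b"
proof -
  have "(x,y) \<in> hedge N a b" using assms[symmetric] by (simp add: hedge_def)
  then show ?thesis by (auto simp: hedge_def)
qed
lemma vedge_eq: assumes "vedge x y = vedge a b" shows "x = a \<and> y = b"
proof -
  have "(x,y) \<in> vedge a b" "(x,Suc y) \<in> vedge a b" using assms[symmetric] by (simp_all add: vedge_def)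
  then show ?thesis by (auto simp: vedge_def)
qed
lemma hedge_vedge: "hedge N x y \<noteq> vedge a b"
proof
  assume h: "hedge N x y = vedge a b"
  have "(a,b) \<in> hedge N x y" "(a,Suc b) \<in> hedge N x y" using h by (simp_all add: vedge_def)
  then show False by (auto simp: hedge_def)
qed

lemma verts_iff[simp]: "(x,y) \<in> cyl_verts k N \<longleftrightarrow> x < N \<and> y \<le> k"
  by (simp add: cyl_verts_def)
lemma edge_form:
  assumes "e \<in> cyl_edges k N"
  obtains a b where "a < N" "b \<le> k" "e = hedge N a b" | a b where "a < N" "b < k" "e = vedge a b"
  using assms unfolding cyl_edges_def by blast
lemma edges_sub: "0 < N \<Longrightarrow> e \<in> cyl_edges k N \<Longrightarrow> e \<subseteq> cyl_verts k N"
  by (erule edge_form) (auto simp: hedge_sc sc_def vedge_def)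
lemma edge_cases:
  assumes "e \<in> cyl_edges k N" "(x,y) \<in> e"
  shows "e = hedge N x y \<or> (\<exists>a<N. sc N a = x \<and> e = hedge N a y) \<or> (y < k \<and> e = vedge x y)
     \<or> (0 < y \<and> e = vedge x (y - 1))"
  using assms(1)
proof (cases rule: edge_form)
  case (1 a b)
  then show ?thesis using assms(2) by (auto simp: hedge_sc)
next
  case (2 a b)
  then show ?thesis using assms(2) by (auto simp: vedge_def)
qed

lemma pm_unique:
  assumes "M \<in> pms k N" "v \<in> cyl_verts k N" "e1 \<in> M" "e2 \<in> M" "v \<in> e1" "v \<in> e2"
  shows "e1 = e2"
  using assms unfolding pms_def perfect_matching_def by blast

lemma pm_cover:
  assumes "M \<in> pms k N" "v \<in> cyl_verts k N"
  obtains e where "e \<in> M" "v \<in> e"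
  using assms unfolding pms_def perfect_matching_def by blast

lemma pm_sub: "M \<in> pms k N \<Longrightarrow> M \<subseteq> cyl_edges k N"
  unfolding pms_def perfect_matching_def by blast

lemma swap_pm:
  assumes pm: "perfect_matching V E M" and e: "e1 \<in> M" "e2 \<in> M" "e1 \<noteq> e2"
    and f: "f1 \<in> E" "f2 \<in> E" and sub: "e1 \<subseteq> V" "e2 \<subseteq> V"
    and dj: "f1 \<inter> f2 = {}" and un: "f1 \<union> f2 = e1 \<union> e2" and ne: "f1 \<noteq> {}" "f2 \<noteq> {}"
    and fe: "f1 \<notin> {e1,e2}" "f2 \<notin> {e1,e2}"
  shows "perfect_matching V E (M - {e1,e2} \<union> {f1,f2})"
    and "(M - (M - {e1,e2} \<union> {f1,f2})) \<union> ((M - {e1,e2} \<union> {f1,f2}) - M) = {e1,e2,f1,f2}"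
proof -
  have uniq: "\<And>v x y. v \<in> V \<Longrightarrow> x \<in> M \<Longrightarrow> y \<in> M \<Longrightarrow> v \<in> x \<Longrightarrow> v \<in> y \<Longrightarrow> x = y"
    using pm unfolding perfect_matching_def by blast
  have notin: "f \<notin> M" if "f \<in> {f1,f2}" for f
  proof
    assume fM: "f \<in> M"
    from that ne obtain v where v: "v \<in> f" by blast
    then have "v \<in> e1 \<union> e2" using un that by blast
    then show False
    proof
      assume "v \<in> e1" then have "f = e1" using uniq[OF _ fM e(1) v] sub by blast
      then show False using fe that by auto
    next
      assume "v \<in> e2" then have "f = e2" using uniq[OF _ fM e(2) v] sub by blast
      then show False using fe that by auto
    qed
  qed
  show "(M - (M - {e1,e2} \<union> {f1,f2})) \<union> ((M - {e1,e2} \<union> {f1,f2}) - M) = {e1,e2,f1,f2}"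
    using e fe notin by auto
  show "perfect_matching V E (M - {e1,e2} \<union> {f1,f2})"
    unfolding perfect_matching_def
  proof (intro conjI ballI)
    show "M - {e1, e2} \<union> {f1, f2} \<subseteq> E" using pm f unfolding perfect_matching_def by blast
  next
    fix v assume vV: "v \<in> V"
    show "\<exists>!e. e \<in> M - {e1, e2} \<union> {f1, f2} \<and> v \<in> e"
    proof (cases "v \<in> e1 \<union> e2")
      case True
      then have vf: "v \<in> f1 \<union> f2" using un by simp
      have other: "x \<notin> M - {e1,e2}" if "v \<in> x" for x
      proof
        assume "x \<in> M - {e1,e2}"
        then show False using True uniq[OF vV, of x e1] uniq[OF vV, of x e2] e that by blast
      qed
      show ?thesis
      proof (cases "v \<in> f1")
        case True
        then have "v \<notin> f2" using dj by blast
        then show ?thesis using True other by blast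
      next
        case False
        then have "v \<in> f2" using vf by blast
        then show ?thesis using False other by blast
      qed
    next
      case False
      then have nf: "v \<notin> f1" "v \<notin> f2" using un by auto
      obtain x where x: "x \<in> M" "v \<in> x" using pm vV unfolding perfect_matching_def by blast
      then have "x \<noteq> e1" "x \<noteq> e2" using False by auto
      then show ?thesis using x nf uniq[OF vV] by blast
    qed
  qed
qed

definition agree :: "nat \<Rightarrow> nat \<Rightarrow> edge set \<Rightarrow> edge set \<Rightarrow> bool" where
  "agree N s M M' \<longleftrightarrow> (\<forall>a b. b < s \<longrightarrow> (hedge N a b \<in> M \<longleftrightarrow> hedge N a b \<in> M') \<and> (vedge a b \<in> M \<longleftrightarrow> vedge a b \<in> M'))"

lemma agree_refl: "agree N s M M" by (simp add: agree_def)
lemma agree_trans: "agree N s M1 M2 \<Longrightarrow> agree N s M2 M3 \<Longrightarrow> agree N s M1 M3"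
  by (simp add: agree_def)
lemma agree_mono: "agree N s M1 M2 \<Longrightarrow> s' \<le> s \<Longrightarrow> agree N s' M1 M2"
  by (simp add: agree_def)

lemma low_notin:
  assumes "y < b"
  shows "hedge N x y \<notin> {hedge N a b, hedge N a (Suc b), vedge a b, vedge c b}"
    "vedge x y \<notin> {hedge N a b, hedge N a (Suc b), vedge a b, vedge c b}"
proof -
  have 1: "hedge N x y \<noteq> hedge N a b" using hedge_row[of N x y a b] assms by blast
  have 2: "hedge N x y \<noteq> hedge N a (Suc b)" using hedge_row[of N x y a "Suc b"] assms by fastforce
  have 3: "vedge x y \<noteq> vedge a b" using vedge_eq[of x y a b] assms by blast
  have 4: "vedge x y \<noteq> vedge c b" using vedge_eq[of x y c b] assms by blast
  show "hedge N x y \<notin> {hedge N a b, hedge N a (Suc b), vedge a b, vedge c b}"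
    using 1 2 hedge_vedge[of N x y] by simp
  show "vedge x y \<notin> {hedge N a b, hedge N a (Suc b), vedge a b, vedge c b}"
    using 3 4 hedge_vedge[of N _ _ x y] by (simp add: eq_commute[of "vedge x y"])
qed

lemma agree_swap1:
  "agree N b M (M - {hedge N a b, hedge N a (Suc b)} \<union> {vedge a b, vedge c b})"
  unfolding agree_def
proof (intro allI impI conjI)
  fix x y assume y: "y < b"
  note l = low_notin[OF y, where N=N and x=x and a=a and c=c]
  show "(hedge N x y \<in> M) = (hedge N x y \<in> M - {hedge N a b, hedge N a (Suc b)} \<union> {vedge a b, vedge c b})"
    "(vedge x y \<in> M) = (vedge x y \<in> M - {hedge N a b, hedge N a (Suc b)} \<union> {vedge a b, vedge c b})"
    using l by blast+
qed

lemma agree_swap2: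
  "agree N b M (M - {vedge a b, vedge c b} \<union> {hedge N a b, hedge N a (Suc b)})"
  unfolding agree_def
proof (intro allI impI conjI)
  fix x y assume y: "y < b"
  note l = low_notin[OF y, where N=N and x=x and a=a and c=c]
  show "(hedge N x y \<in> M) = (hedge N x y \<in> M - {vedge a b, vedge c b} \<union> {hedge N a b, hedge N a (Suc b)})"
    "(vedge x y \<in> M) = (vedge x y \<in> M - {vedge a b, vedge c b} \<union> {hedge N a b, hedge N a (Suc b)})"
    using l by blast+
qed

lemma square_in_faces: "a < N \<Longrightarrow> b < k \<Longrightarrow> square_face N a b \<in> cyl_faces k N"
  unfolding cyl_faces_def by (intro UnI1 CollectI exI conjI) (rule refl | assumption)+

lemma vedge_in: "a < N \<Longrightarrow> b < k \<Longrightarrow> vedge a b \<in> cyl_edges k N"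
  unfolding cyl_edges_def by (intro UnI2 CollectI exI conjI) (rule refl | assumption)+
lemma hedge_in: "a < N \<Longrightarrow> b \<le> k \<Longrightarrow> hedge N a b \<in> cyl_edges k N"
  unfolding cyl_edges_def by (intro UnI1 CollectI exI conjI) (rule refl | assumption)+

lemma flip_h:
  assumes M: "M \<in> pms k N" and N: "3 \<le> N" and a: "a < N" and b: "b < k"
    and h1: "hedge N a b \<in> M" and h2: "hedge N a (Suc b) \<in> M"
  defines "M' \<equiv> M - {hedge N a b, hedge N a (Suc b)} \<union> {vedge a b, vedge (sc N a) b}"
  shows "M' \<in> pms k N \<and> (M, M') \<in> total_resonance k N"
proof -
  have N0: "0 < N" using N by simp
  have pm: "perfect_matching (cyl_verts k N) (cyl_edges k N) M" using M by (simp add: pms_def)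
  have E1: "hedge N a b \<in> cyl_edges k N" "hedge N a (Suc b) \<in> cyl_edges k N"
    using h1 h2 pm_sub[OF M] by auto
  have F: "vedge a b \<in> cyl_edges k N" "vedge (sc N a) b \<in> cyl_edges k N"
    using a b sc_lt[OF N0] by (simp_all add: vedge_in)
  have ne: "hedge N a b \<noteq> hedge N a (Suc b)" using hedge_row[of N a b a "Suc b"] by auto
  have dj: "vedge a b \<inter> vedge (sc N a) b = {}" using sc_neq[of N a] N a by (auto simp: vedge_def)
  have un: "vedge a b \<union> vedge (sc N a) b = hedge N a b \<union> hedge N a (Suc b)"
    by (auto simp: vedge_def hedge_sc)
  have fe: "vedge a b \<notin> {hedge N a b, hedge N a (Suc b)}" "vedge (sc N a) b \<notin> {hedge N a b, hedge N a (Suc b)}"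
    using hedge_vedge by (metis insert_iff singletonD)+
  note sw = swap_pm[OF pm h1 h2 ne F edges_sub[OF N0 E1(1)] edges_sub[OF N0 E1(2)] dj un _ _ fe]
  have nv: "vedge a b \<noteq> {}" "vedge (sc N a) b \<noteq> {}" by (auto simp: vedge_def)
  have "M' \<in> pms k N" using sw(1)[OF nv] unfolding M'_def pms_def by simp
  moreover have "(M - M') \<union> (M' - M) = square_face N a b"
    using sw(2)[OF nv] unfolding M'_def square_sc by (simp only: insert_commute)
  ultimately show ?thesis using M square_in_faces[OF a b] unfolding total_resonance_def by simp
qed

lemma flip_v:
  assumes M: "M \<in> pms k N" and N: "3 \<le> N" and a: "a < N" and b: "b < k"
    and v1: "vedge a b \<in> M" and v2: "vedge (sc N a) b \<in> M"
  defines "M' \<equiv> M - {vedge a b, vedge (sc N a) b} \<union> {hedge N a b, hedge N a (Suc b)}"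
  shows "M' \<in> pms k N \<and> (M, M') \<in> total_resonance k N"
proof -
  have N0: "0 < N" using N by simp
  have pm: "perfect_matching (cyl_verts k N) (cyl_edges k N) M" using M by (simp add: pms_def)
  have E1: "vedge a b \<in> cyl_edges k N" "vedge (sc N a) b \<in> cyl_edges k N"
    using v1 v2 pm_sub[OF M] by auto
  have F: "hedge N a b \<in> cyl_edges k N" "hedge N a (Suc b) \<in> cyl_edges k N"
    using a b by (simp_all add: hedge_in)
  have ne: "vedge a b \<noteq> vedge (sc N a) b" using vedge_eq[of a b "sc N a" b] sc_neq[of N a] N a by auto
  have dj: "hedge N a b \<inter> hedge N a (Suc b) = {}" by (auto simp: hedge_sc)
  have un: "hedge N a b \<union> hedge N a (Suc b) = vedge a b \<union> vedge (sc N a) b"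
    by (auto simp: vedge_def hedge_sc)
  have fe: "hedge N a b \<notin> {vedge a b, vedge (sc N a) b}" "hedge N a (Suc b) \<notin> {vedge a b, vedge (sc N a) b}"
    using hedge_vedge by (metis insert_iff singletonD)+
  note sw = swap_pm[OF pm v1 v2 ne F edges_sub[OF N0 E1(1)] edges_sub[OF N0 E1(2)] dj un _ _ fe]
  have nv: "hedge N a b \<noteq> {}" "hedge N a (Suc b) \<noteq> {}" by (auto simp: hedge_def)
  have "M' \<in> pms k N" using sw(1)[OF nv] unfolding M'_def pms_def by simp
  moreover have "(M - M') \<union> (M' - M) = square_face N a b"
    using sw(2)[OF nv] unfolding M'_def square_sc by (simp only: insert_commute)
  ultimately show ?thesis using M square_in_faces[OF a b] unfolding total_resonance_def by simp
qed

definition down :: "edge set \<Rightarrow> nat \<Rightarrow> nat \<Rightarrow> bool" where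
  "down M x s \<longleftrightarrow> 0 < s \<and> vedge x (s - 1) \<in> M"

lemma cover_cases:
  assumes M: "M \<in> pms k N" and x: "x < N" and y: "y \<le> k"
  shows "hedge N x y \<in> M \<or> (\<exists>a<N. sc N a = x \<and> hedge N a y \<in> M) \<or> (y < k \<and> vedge x y \<in> M)
     \<or> down M x y"
proof -
  obtain e where e: "e \<in> M" "(x,y) \<in> e" using pm_cover[OF M, of "(x,y)"] x y by auto
  have "e \<in> cyl_edges k N" using e pm_sub[OF M] by auto
  from edge_cases[OF this e(2)] e(1) show ?thesis unfolding down_def by auto
qed

lemma mem_facts:
  "(x,y) \<in> hedge N x y" "(sc N x, y) \<in> hedge N x y" "(x,y) \<in> vedge x y" "(x, Suc y) \<in> vedge x y"
  "0 < y \<Longrightarrow> (x,y) \<in> vedge x (y - 1)"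
  by (auto simp: hedge_sc vedge_def)

lemma hv_conflict:
  assumes M: "M \<in> pms k N" "x < N" "y \<le> k" "hedge N a z \<in> M" "vedge b w \<in> M"
    "(x,y) \<in> hedge N a z" "(x,y) \<in> vedge b w"
  shows False
  using pm_unique[OF M(1) _ M(4) M(5) M(6) M(7)] M(2,3) hedge_vedge by auto

lemma rtr_pms: "(M, M') \<in> (total_resonance k N)\<^sup>* \<Longrightarrow> M \<in> pms k N \<Longrightarrow> M' \<in> pms k N"
  by (induction rule: rtrancl_induct) (auto simp: total_resonance_def)

lemma lemB:
  assumes N: "3 \<le> N"
  shows "k - s = d \<Longrightarrow> M \<in> pms k N \<Longrightarrow> c < N \<Longrightarrow> s \<le> k \<Longrightarrow> vedge c s \<in> M \<or> down M c s
    \<Longrightarrow> \<not> down M (sc N c) s \<Longrightarrow> \<not> down M (sc N (sc N c)) s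
    \<Longrightarrow> \<exists>M'. (M, M') \<in> (total_resonance k N)\<^sup>* \<and> hedge N (sc N c) s \<in> M' \<and> agree N s M M'"
proof (induction d arbitrary: s M c rule: less_induct)
  case (less d s M c)
  note M = less.prems(2)
  have N0: "0 < N" using N by simp
  define x1 where "x1 = sc N c"
  define x2 where "x2 = sc N x1"
  define x3 where "x3 = sc N x2"
  have x: "x1 < N" "x2 < N" "x3 < N" using sc_lt[OF N0] unfolding x1_def x2_def x3_def by auto
  have s: "s \<le> k" using less.prems by simp
  have nd1: "\<not> down M x1 s" and nd2: "\<not> down M x2 s" using less.prems unfolding x1_def x2_def by auto
  have c: "c < N" using less.prems by simp
  have nohc: "hedge N c s \<notin> M"
  proof
    assume h: "hedge N c s \<in> M"
    from less.prems(5) show False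
    proof
      assume "vedge c s \<in> M"
      then show False using hv_conflict[OF M c s h _ mem_facts(1) mem_facts(3)] by blast
    next
      assume "down M c s"
      then have "vedge c (s - 1) \<in> M" "0 < s" by (auto simp: down_def)
      then show False using hv_conflict[OF M c s h _ mem_facts(1) mem_facts(5)] by blast
    qed
  qed
  from cover_cases[OF M x(1) s] show ?case
  proof (elim disjE)
    assume "hedge N x1 s \<in> M"
    then show ?thesis unfolding x1_def using agree_refl by blast
  next
    assume "\<exists>a<N. sc N a = x1 \<and> hedge N a s \<in> M"
    then obtain a where "a < N" "sc N a = sc N c" "hedge N a s \<in> M" unfolding x1_def by blast
    then have "hedge N c s \<in> M" using sc_inj[OF _ c] by blast
    then show ?thesis using nohc by blast
  next
    assume "down M x1 s" then show ?thesis using nd1 by blast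
  next
    assume "s < k \<and> vedge x1 s \<in> M"
    then have sk: "s < k" and v1: "vedge x1 s \<in> M" by auto
    have noh1: "hedge N x1 s \<notin> M"
      using hv_conflict[OF M x(1) s _ v1 mem_facts(1) mem_facts(3)] by blast
    from cover_cases[OF M x(2) s] show ?thesis
    proof (elim disjE)
      assume "\<exists>a<N. sc N a = x2 \<and> hedge N a s \<in> M"
      then obtain a where "a < N" "sc N a = sc N x1" "hedge N a s \<in> M" unfolding x2_def by blast
      then have "hedge N x1 s \<in> M" using sc_inj[OF _ x(1)] by blast
      then show ?thesis using noh1 by blast
    next
      assume "down M x2 s" then show ?thesis using nd2 by blast
    next
      assume "s < k \<and> vedge x2 s \<in> M"
      then have v2: "vedge (sc N x1) s \<in> M" unfolding x2_def by auto
      define M' where "M' = M - {vedge x1 s, vedge (sc N x1) s} \<union> {hedge N x1 s, hedge N x1 (Suc s)}"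
      have "M' \<in> pms k N \<and> (M, M') \<in> total_resonance k N"
        using flip_v[OF M N x(1) sk v1 v2] unfolding M'_def by blast
      moreover have "hedge N x1 s \<in> M'" unfolding M'_def by simp
      moreover have "agree N s M M'" unfolding M'_def by (rule agree_swap2)
      ultimately show ?thesis unfolding x1_def by blast
    next
      assume h2: "hedge N x2 s \<in> M"
      have nv2: "vedge x2 s \<notin> M"
        using hv_conflict[OF M x(2) s h2 _ mem_facts(1) mem_facts(3)] by blast
      have nv3: "vedge x3 s \<notin> M"
        using hv_conflict[OF M x(3) s h2 _ _ mem_facts(3)] mem_facts(2)[of N x2 s] unfolding x3_def by blast
      have lt: "k - Suc s < d" using less.prems(1) sk by simp
      have "\<exists>M1. (M, M1) \<in> (total_resonance k N)\<^sup>* \<and> hedge N (sc N x1) (Suc s) \<in> M1 \<and> agree N (Suc s) M M1"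
        apply (rule less.IH[OF lt refl M x(1)])
        using sk v1 nv2 nv3 unfolding down_def x2_def x3_def by auto
      then obtain M1 where M1: "(M, M1) \<in> (total_resonance k N)\<^sup>*" "hedge N x2 (Suc s) \<in> M1"
        "agree N (Suc s) M M1" unfolding x2_def by blast
      have M1p: "M1 \<in> pms k N" using rtr_pms[OF M1(1) M] .
      have h2': "hedge N x2 s \<in> M1" and v1': "vedge x1 s \<in> M1"
        using M1(3) h2 v1 unfolding agree_def by auto
      define M2 where "M2 = M1 - {hedge N x2 s, hedge N x2 (Suc s)} \<union> {vedge x2 s, vedge (sc N x2) s}"
      have M2: "M2 \<in> pms k N \<and> (M1, M2) \<in> total_resonance k N"
        using flip_h[OF M1p N x(2) sk h2' M1(2)] unfolding M2_def by blast
      have v1'': "vedge x1 s \<in> M2" "vedge (sc N x1) s \<in> M2"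
      proof -
        have "vedge x1 s \<noteq> hedge N x2 s" "vedge x1 s \<noteq> hedge N x2 (Suc s)"
          using hedge_vedge by metis+
        then show "vedge x1 s \<in> M2" "vedge (sc N x1) s \<in> M2"
          using v1' unfolding M2_def x2_def by auto
      qed
      define M3 where "M3 = M2 - {vedge x1 s, vedge (sc N x1) s} \<union> {hedge N x1 s, hedge N x1 (Suc s)}"
      have M3: "M3 \<in> pms k N \<and> (M2, M3) \<in> total_resonance k N"
        using flip_v[OF conjunct1[OF M2] N x(1) sk v1''] unfolding M3_def by blast
      have "(M, M3) \<in> (total_resonance k N)\<^sup>*" using M1(1) M2 M3 by (meson rtrancl_into_rtrancl)
      moreover have "hedge N x1 s \<in> M3" unfolding M3_def by simp
      moreover have "agree N s M M3"
        using agree_mono[OF M1(3), of s] agree_swap1[of N s M1 x2 "sc N x2"] agree_swap2[of N s M2 x1 "sc N x1"]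
        unfolding M2_def M3_def by (meson agree_trans le_SucI order_refl)
      ultimately show ?thesis unfolding x1_def by blast
    qed
  qed
qed

lemma sc_mod: "0 < N \<Longrightarrow> sc N (i mod N) = Suc i mod N"
  unfolding sc_def by (simp add: mod_Suc_eq)

lemma exists_vert:
  assumes M: "M \<in> pms k N" and N: "3 \<le> N" and oddN: "odd N" and r: "r \<le> k"
    and nd: "\<forall>x<N. \<not> down M x r"
  shows "\<exists>x<N. vedge x r \<in> M"
proof (rule ccontr)
  assume "\<not> (\<exists>x<N. vedge x r \<in> M)"
  then have nv: "\<forall>x<N. vedge x r \<notin> M" by blast
  have N0: "0 < N" using N by simp
  define g where "g x = (hedge N x r \<in> M)" for x
  have alt: "g (sc N x) \<longleftrightarrow> \<not> g x" if x: "x < N" for x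
  proof -
    have sx: "sc N x < N" using sc_lt[OF N0] .
    have one: "g (sc N x) \<or> g x"
      using cover_cases[OF M sx r] nd nv sx sc_inj[OF _ x] unfolding g_def by blast
    have notboth: "\<not> (g (sc N x) \<and> g x)"
    proof
      assume "g (sc N x) \<and> g x"
      then have a: "hedge N (sc N x) r \<in> M" "hedge N x r \<in> M" unfolding g_def by auto
      have v: "(sc N x, r) \<in> cyl_verts k N" using sx r by simp
      have "hedge N (sc N x) r = hedge N x r"
        using pm_unique[OF M v a(1) a(2) mem_facts(1) mem_facts(2)] .
      then have "(x, r) \<in> hedge N (sc N x) r" using mem_facts(1)[of x r N] by simp
      then show False using sc_neq[of N x] sc_sc_neq[of N x] N x by (auto simp: hedge_sc)
    qed
    from one notboth show ?thesis by blast
  qed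
  have all: "g (i mod N) \<longleftrightarrow> (g 0 \<longleftrightarrow> even i)" for i
  proof (induction i)
    case 0 then show ?case by simp
  next
    case (Suc i)
    have "g (Suc i mod N) \<longleftrightarrow> \<not> g (i mod N)"
      using alt[of "i mod N"] sc_mod[OF N0, of i] N0 by simp
    then show ?case using Suc by simp
  qed
  from all[of N] oddN show False by simp
qed

lemma fin_F: "finite {x. x < (N::nat) \<and> P x}" by (rule finite_subset[of _ "{..<N}"]) auto

lemma lemA:
  assumes N: "3 \<le> N" and oddN: "odd N"
  shows "card {x. x < N \<and> vedge x r \<notin> M} = t \<Longrightarrow> M \<in> pms k N \<Longrightarrow> r < k \<Longrightarrow> (\<forall>x<N. \<not> down M x r)
    \<Longrightarrow> \<exists>M'. (M, M') \<in> (total_resonance k N)\<^sup>* \<and> (\<forall>x<N. vedge x r \<in> M') \<and> agree N r M M'"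
proof (induction t arbitrary: M rule: less_induct)
  case (less t M)
  note M = less.prems(2)
  have rk: "r < k" and nd: "\<forall>x<N. \<not> down M x r" using less.prems by auto
  have N0: "0 < N" using N by simp
  show ?case
  proof (cases "\<forall>x<N. vedge x r \<in> M")
    case True then show ?thesis using agree_refl by blast
  next
    case False
    then obtain z where z: "z < N" "vedge z r \<notin> M" by blast
    obtain c0 where c0: "c0 < N" "vedge c0 r \<in> M" using exists_vert[OF M N oddN _ nd] rk by auto
    have "\<exists>c<N. vedge c r \<in> M \<and> vedge (sc N c) r \<notin> M"
    proof (rule ccontr)
      assume "\<not> ?thesis"
      then have step: "\<And>c. c < N \<Longrightarrow> vedge c r \<in> M \<Longrightarrow> vedge (sc N c) r \<in> M" by blast
      have "vedge ((c0 + i) mod N) r \<in> M" for i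
      proof (induction i)
        case 0 then show ?case using c0 by simp
      next
        case (Suc i)
        then show ?case using step[of "(c0 + i) mod N"] sc_mod[OF N0, of "c0 + i"] N0 by simp
      qed
      from this[of "N - c0 + z"] have "vedge ((N + z) mod N) r \<in> M" using c0 by simp
      then show False using z by simp
    qed
    then obtain c where c: "c < N" "vedge c r \<in> M" "vedge (sc N c) r \<notin> M" by blast
    define x1 where "x1 = sc N c"
    define x2 where "x2 = sc N x1"
    have x: "x1 < N" "x2 < N" using sc_lt[OF N0] unfolding x1_def x2_def by auto
    have rle: "r \<le> k" using rk by simp
    have nohc: "hedge N c r \<notin> M"
      using hv_conflict[OF M c(1) rle _ c(2) mem_facts(1) mem_facts(3)] by blast
    have h1: "hedge N x1 r \<in> M"
      using cover_cases[OF M x(1) rle] nd x(1) c(3) nohc sc_inj[OF _ c(1)] unfolding x1_def by blast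
    have nv2: "vedge x2 r \<notin> M"
      using hv_conflict[OF M x(2) rle h1 _ _ mem_facts(3)] mem_facts(2)[of N x1 r] unfolding x2_def by blast
    have "\<exists>M1. (M, M1) \<in> (total_resonance k N)\<^sup>* \<and> hedge N (sc N c) (Suc r) \<in> M1 \<and> agree N (Suc r) M M1"
      apply (rule lemB[OF N refl M c(1)])
      using rk c nv2 unfolding down_def x1_def x2_def by auto
    then obtain M1 where M1: "(M, M1) \<in> (total_resonance k N)\<^sup>*" "hedge N x1 (Suc r) \<in> M1"
      "agree N (Suc r) M M1" unfolding x1_def by blast
    have M1p: "M1 \<in> pms k N" using rtr_pms[OF M1(1) M] .
    have h1': "hedge N x1 r \<in> M1" using M1(3) h1 unfolding agree_def by auto
    define M2 where "M2 = M1 - {hedge N x1 r, hedge N x1 (Suc r)} \<union> {vedge x1 r, vedge (sc N x1) r}"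
    have M2: "M2 \<in> pms k N \<and> (M1, M2) \<in> total_resonance k N"
      using flip_h[OF M1p N x(1) rk h1' M1(2)] unfolding M2_def by blast
    have ag: "agree N r M M2"
      using agree_trans[OF agree_mono[OF M1(3), of r] agree_swap1[of N r M1 x1 "sc N x1"]]
      unfolding M2_def by simp
    have sub: "{x. x < N \<and> vedge x r \<notin> M2} \<subseteq> {x. x < N \<and> vedge x r \<notin> M}"
    proof safe
      fix x assume "x < N" "vedge x r \<notin> M2" "vedge x r \<in> M"
      then have "vedge x r \<in> M1" using M1(3) unfolding agree_def by auto
      moreover have "vedge x r \<noteq> hedge N x1 r" "vedge x r \<noteq> hedge N x1 (Suc r)"
        using hedge_vedge by metis+
      ultimately have "vedge x r \<in> M2" unfolding M2_def by auto
      then show False using \<open>vedge x r \<notin> M2\<close> by blast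
    qed
    have "x1 \<in> {x. x < N \<and> vedge x r \<notin> M}" using x(1) c(3) unfolding x1_def by simp
    moreover have "x1 \<notin> {x. x < N \<and> vedge x r \<notin> M2}" unfolding M2_def by simp
    ultimately have ps: "{x. x < N \<and> vedge x r \<notin> M2} \<subset> {x. x < N \<and> vedge x r \<notin> M}" using sub by blast
    have "card {x. x < N \<and> vedge x r \<notin> M2} < card {x. x < N \<and> vedge x r \<notin> M}"
      by (rule psubset_card_mono[OF fin_F ps])
    then have lt: "card {x. x < N \<and> vedge x r \<notin> M2} < t"
      using less.prems(1) by simp
    have nd2: "\<forall>x<N. \<not> down M2 x r"
      using nd ag unfolding agree_def down_def by auto
    obtain M' where M': "(M2, M') \<in> (total_resonance k N)\<^sup>*" "\<forall>x<N. vedge x r \<in> M'" "agree N r M2 M'"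
      using less.IH[OF lt refl conjunct1[OF M2] rk nd2] by blast
    have "(M, M') \<in> (total_resonance k N)\<^sup>*"
      using M1(1) M2 M'(1) by (meson rtrancl_into_rtrancl rtrancl_trans)
    then show ?thesis using M'(2) agree_trans[OF ag M'(3)] by blast
  qed
qed

lemma vcover: "1 \<le> m \<Longrightarrow> y \<le> 2*m - 1 \<Longrightarrow> (x,y) \<in> vedge x (2*(y div 2)) \<and> y div 2 < m"
  by (auto simp: vedge_def)

lemma reach:
  assumes N: "3 \<le> N" and oddN: "odd N" and k: "k = 2*m - 1" and m: "1 \<le> m" and M: "M \<in> pms k N"
  shows "j \<le> m \<Longrightarrow> \<exists>M'. (M, M') \<in> (total_resonance k N)\<^sup>* \<and> (\<forall>i<j. \<forall>x<N. vedge x (2*i) \<in> M')"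
proof (induction j)
  case 0 then show ?case by blast
next
  case (Suc j)
  then obtain M' where M': "(M, M') \<in> (total_resonance k N)\<^sup>*" "\<forall>i<j. \<forall>x<N. vedge x (2*i) \<in> M'"
    by auto
  have M'p: "M' \<in> pms k N" using rtr_pms[OF M'(1) M] .
  have rk: "2*j < k" using Suc.prems k by simp
  have nd: "\<forall>x<N. \<not> down M' x (2*j)"
  proof (intro allI impI notI)
    fix x assume x: "x < N" and d: "down M' x (2*j)"
    then have j0: "0 < j" and v: "vedge x (2*j - 1) \<in> M'" by (auto simp: down_def)
    have v2: "vedge x (2*(j-1)) \<in> M'" using M'(2) j0 x by simp
    have "(x, 2*j - 1) \<in> vedge x (2*j - 1)" by (simp add: vedge_def)
    moreover have "Suc (2*(j-1)) = 2*j - 1" using j0 by simp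
    then have "(x, 2*j - 1) \<in> vedge x (2*(j-1))" by (simp add: vedge_def)
    moreover have "(x, 2*j - 1) \<in> cyl_verts k N" using x rk by simp
    ultimately have "vedge x (2*j - 1) = vedge x (2*(j-1))"
      using pm_unique[OF M'p _ v v2] by blast
    then have "2*j - 1 = 2*(j-1)" using vedge_eq by blast
    then show False using j0 by simp
  qed
  obtain M'' where M'': "(M', M'') \<in> (total_resonance k N)\<^sup>*" "\<forall>x<N. vedge x (2*j) \<in> M''"
    "agree N (2*j) M' M''"
    using lemA[OF N oddN refl M'p rk nd] by blast
  have "\<forall>i<Suc j. \<forall>x<N. vedge x (2*i) \<in> M''"
  proof (intro allI impI)
    fix i x assume i: "i < Suc j" and x: "x < N"
    show "vedge x (2*i) \<in> M''"
    proof (cases "i = j")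
      case True then show ?thesis using M''(2) x by simp
    next
      case False
      then have "i < j" using i by simp
      then show ?thesis using M'(2) M''(3) x unfolding agree_def by auto
    qed
  qed
  then show ?case using M'(1) M''(1) by (meson rtrancl_trans)
qed

lemma uniqQ:
  assumes k: "k = 2*m - 1" and m: "1 \<le> m" and M: "M \<in> pms k N" and M2: "M2 \<in> pms k N"
    and Q: "\<forall>i<m. \<forall>x<N. vedge x (2*i) \<in> M" and Q2: "\<forall>i<m. \<forall>x<N. vedge x (2*i) \<in> M2"
  shows "M \<subseteq> M2"
proof
  fix e assume e: "e \<in> M"
  then have "e \<in> cyl_edges k N" using pm_sub[OF M] by auto
  then show "e \<in> M2"
  proof (cases rule: edge_form)
    case (1 a b)
    have vc: "(a,b) \<in> vedge a (2*(b div 2))" "b div 2 < m" using vcover[OF m, of b a] 1 k by auto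
    have "vedge a (2*(b div 2)) \<in> M" using Q vc 1 by auto
    then have "hedge N a b = vedge a (2*(b div 2))"
      using pm_unique[OF M _ _ _ mem_facts(1) vc(1)] e 1 by auto
    then show ?thesis using hedge_vedge by blast
  next
    case (2 a b)
    have vc: "(a,b) \<in> vedge a (2*(b div 2))" "b div 2 < m" using vcover[OF m, of b a] 2 k by auto
    have "vedge a (2*(b div 2)) \<in> M" using Q vc 2 by auto
    then have "vedge a b = vedge a (2*(b div 2))"
      using pm_unique[OF M _ _ _ mem_facts(3) vc(1)] e 2 by auto
    moreover have "vedge a (2*(b div 2)) \<in> M2" using Q2 vc 2 by auto
    ultimately show ?thesis using 2 by simp
  qed
qed

lemma M0_pm:
  assumes k: "k = 2*m - 1" and m: "1 \<le> m"
  shows "{vedge x (2*i) | x i. x < N \<and> i < m} \<in> pms k N"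
  unfolding pms_def perfect_matching_def
proof (intro CollectI conjI ballI)
  show "{vedge x (2*i) | x i. x < N \<and> i < m} \<subseteq> cyl_edges k N"
    using k by (auto intro!: vedge_in)
next
  fix v assume v: "v \<in> cyl_verts k N"
  obtain x y where xy: "v = (x,y)" by (cases v)
  have xy': "x < N" "y \<le> k" using v xy by auto
  have vc: "(x,y) \<in> vedge x (2*(y div 2))" "y div 2 < m" using vcover[OF m, of y x] xy' k by auto
  show "\<exists>!e. e \<in> {vedge x (2*i) | x i. x < N \<and> i < m} \<and> v \<in> e"
  proof (rule ex1I[of _ "vedge x (2*(y div 2))"])
    show "vedge x (2*(y div 2)) \<in> {vedge x (2*i) | x i. x < N \<and> i < m} \<and> v \<in> vedge x (2*(y div 2))"
      using vc xy xy' by blast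
  next
    fix e assume "e \<in> {vedge x (2*i) | x i. x < N \<and> i < m} \<and> v \<in> e"
    then obtain x' i where e: "e = vedge x' (2*i)" "v \<in> e" by blast
    then have "x' = x" "y = 2*i \<or> y = Suc (2*i)" using xy by (auto simp: vedge_def)
    then show "e = vedge x (2*(y div 2))" using e(1) by auto
  qed
qed

theorem corollary3p4:
  fixes n m :: nat
  assumes "n \<ge> 1" and "m \<ge> 1"
  shows "graph_connected (pms (2*m - 1) (2*n + 1)) (total_resonance (2*m - 1) (2*n + 1))"
proof -
  define k where "k = 2*m - 1"
  define N where "N = 2*n + 1"
  have N: "3 \<le> N" and oddN: "odd N" using assms unfolding N_def by auto
  have m: "1 \<le> m" using assms by simp
  have RV: "total_resonance k N \<inter> pms k N \<times> pms k N = total_resonance k N"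
    unfolding total_resonance_def by auto
  have symR: "sym (total_resonance k N)"
    unfolding sym_def total_resonance_def by (auto simp: Un_commute)
  have ne: "pms k N \<noteq> {}" using M0_pm[OF k_def m, of N] by blast
  have conn: "(X, Y) \<in> (total_resonance k N)\<^sup>*" if X: "X \<in> pms k N" and Y: "Y \<in> pms k N" for X Y
  proof -
    obtain X' where X': "(X, X') \<in> (total_resonance k N)\<^sup>*" "\<forall>i<m. \<forall>x<N. vedge x (2*i) \<in> X'"
      using reach[OF N oddN k_def m X, of m] by blast
    obtain Y' where Y': "(Y, Y') \<in> (total_resonance k N)\<^sup>*" "\<forall>i<m. \<forall>x<N. vedge x (2*i) \<in> Y'"
      using reach[OF N oddN k_def m Y, of m] by blast
    have Xp: "X' \<in> pms k N" using rtr_pms[OF X'(1) X] .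
    have Yp: "Y' \<in> pms k N" using rtr_pms[OF Y'(1) Y] .
    have "X' = Y'" using uniqQ[OF k_def m Xp Yp X'(2) Y'(2)] uniqQ[OF k_def m Yp Xp Y'(2) X'(2)] by blast
    moreover have "(Y', Y) \<in> (total_resonance k N)\<^sup>*"
      using Y'(1) sym_rtrancl[OF symR] by (auto dest: symD)
    ultimately show ?thesis using X'(1) by (meson rtrancl_trans)
  qed
  show ?thesis
    unfolding graph_connected_def k_def[symmetric] N_def[symmetric] RV
    using ne conn by blast
qed

end
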